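(* Assume the refinement setting of the context, and assume $F(u)=u$, $G(u)=u$, $p\cap\overline{q}\subseteq F(p\cup q)$, $p\cap\overline{q}\subseteq\mathrm{grd}(G)$ and $p\cap\overline{q}\subseteq G(q)$. Let $p'=r^{-1}[p]$ and $q'=r^{-1}[q]$. Then $p'\cup q'\subseteq{\cal L}(X'(q'))(q')$, where ${\cal L}(X'(q'))(s)$ denotes the greatest fixpoint of the monotone map $Y\mapsto q'\cup\big(G'(s)\cap F'(Y)\cap H(Y)\big)$ on $\mathbb{P}(v)$ (the liberal set transformer of the concrete fair iteration $X'(q')=\overline{q'}\Longrightarrow(((F'\sqcap H);X'(q'))\mathrel{\triangledown} G')$).
   Context: Refinement setting: $u$ (abstract states) and $v$ (concrete states) are sets; $F,G$ are conjunctive set transformers on $u$ and $F',G',H$ conjunctive set transformers on $v$ (conjunctive = preserves intersections of nonempty families of subsets, hence monotone). $\mathrm{grd}(E)=\overline{E(\varnothing)}$. $r\subseteq v\times u$ is a total relation (every $y\in v$ is related to some $x\in u$). For $a\subseteq v$, $r[a]=\{x\in u\mid\exists y\in a,(y,x)\in r\}$; for $b\subseteq u$, $r^{-1}[b]=\{y\in v\mid\exists x\in b,(y,x)\in r\}$. Complements $\overline{\cdot}$ are taken in $u$ for subsets of $u$ and in $v$ for subsets of $v$. The refinement conditions are: for all $s\subseteq v$, $F(\overline{r[\overline{s}]})\subseteq\overline{r[\overline{F'(s)}]}$, $G(\overline{r[\overline{s}]})\subseteq\overline{r[\overline{G'(s)}]}$, and $\overline{r[\overline{s}]}\subseteq\overline{r[\overline{H(s)}]}$.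 $p,q\subseteq u$. The choice $F'\sqcap H$ is $s\mapsto F'(s)\cap H(s)$. *)

theory Defs
  imports Main
begin

text \<open>Conjunctive set transformer: preserves intersections of nonempty families.
  The state spaces u, v are modelled as the universes of types 'a, 'b.\<close>
definition conjunctive :: "('a set \<Rightarrow> 'a set) \<Rightarrow> bool" where
  "conjunctive F \<longleftrightarrow> (\<forall>S::'a set set. S \<noteq> {} \<longrightarrow> F (\<Inter>S) = (\<Inter>X\<in>S. F X))"

definition grd :: "('a set \<Rightarrow> 'a set) \<Rightarrow> 'a set" where
  "grd E = - E {}"

end

theory Submission
  imports Defs
begin

lemma conj_mono: assumes "conjunctive F" "A \<subseteq> B" shows "F A \<subseteq> F B"
proof -
  have "F (\<Inter>{A,B}) = (\<Inter>X\<in>{A,B}. F X)"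
    using assms(1)[unfolded conjunctive_def, rule_format, of "{A,B}"] by simp
  moreover have "\<Inter>{A,B} = A" using assms(2) by auto
  ultimately show ?thesis by auto
qed

theorem lemma5:
  fixes F G :: "'a set \<Rightarrow> 'a set"
    and F' G' H :: "'b set \<Rightarrow> 'b set"
    and r :: "('b \<times> 'a) set"
    and p q :: "'a set"
  assumes "conjunctive F" and "conjunctive G"
    and "conjunctive F'" and "conjunctive G'" and "conjunctive H"
    and total: "\<forall>y. \<exists>x. (y, x) \<in> r"
    and refF: "\<forall>s. F (- (r `` (- s))) \<subseteq> - (r `` (- F' s))"
    and refG: "\<forall>s. G (- (r `` (- s))) \<subseteq> - (r `` (- G' s))"
    and refH: "\<forall>s. - (r `` (- s)) \<subseteq> - (r `` (- H s))"
    and "F UNIV = UNIV" and "G UNIV = UNIV"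
    and "p \<inter> - q \<subseteq> F (p \<union> q)"
    and "p \<inter> - q \<subseteq> grd G"
    and "p \<inter> - q \<subseteq> G q"
  shows "(r\<inverse> `` p) \<union> (r\<inverse> `` q)
           \<subseteq> gfp (\<lambda>Y. (r\<inverse> `` q) \<union> (G' (r\<inverse> `` q) \<inter> F' Y \<inter> H Y))"
proof (rule gfp_upperbound)
  let ?Y = "(r\<inverse> `` p) \<union> (r\<inverse> `` q)"
  have q1: "q \<subseteq> - (r `` (- (r\<inverse> `` q)))" by blast
  have p1: "p \<union> q \<subseteq> - (r `` (- ?Y))" by blast
  have Gq: "G q \<subseteq> - (r `` (- G' (r\<inverse> `` q)))"
    using conj_mono[OF assms(2) q1] refG by (meson order_trans)
  have Fq: "F (p \<union> q) \<subseteq> - (r `` (- F' ?Y))"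
    using conj_mono[OF assms(1) p1] refF by (meson order_trans)
  have Hq: "p \<subseteq> - (r `` (- H ?Y))" using p1 refH by (meson order_trans Un_upper1)
  show "?Y \<subseteq> (r\<inverse> `` q) \<union> (G' (r\<inverse> `` q) \<inter> F' ?Y \<inter> H ?Y)"
  proof
    fix y assume y: "y \<in> ?Y"
    show "y \<in> (r\<inverse> `` q) \<union> (G' (r\<inverse> `` q) \<inter> F' ?Y \<inter> H ?Y)"
    proof (cases "y \<in> r\<inverse> `` q")
      case True then show ?thesis by blast
    next
      case False
      with y obtain x where x: "x \<in> p" "(y,x) \<in> r" by blast
      with False have "x \<notin> q" by blast
      with x have "x \<in> p \<inter> - q" by blast
      then have g: "x \<in> - (r `` (- G' (r\<inverse> `` q)))"
        and f: "x \<in> - (r `` (- F' ?Y))" and h: "x \<in> - (r `` (- H ?Y))"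
        using assms(12,14) Gq Fq Hq x(1) by (meson subsetD)+
      have "y \<in> G' (r\<inverse> `` q)" using g x(2) by auto
      moreover have "y \<in> F' ?Y" using f x(2) by auto
      moreover have "y \<in> H ?Y" using h x(2) by auto
      ultimately show ?thesis by blast
    qed
  qed
qed

end
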